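(* Let $p$ be a prime, $k\ge 1$, $q=p^k$, and $n\ge 1$. Then for every integer $i$ with $1\le i\le kn$, we have $p^{kn-i}\in\sigma\big(\mathrm{AGL}(n,q)\big)$.
   Context: For a finite group $G$ and a subgroup $H\le G$, a subset $\mathcal F\subseteq G$ is called $H$-intersecting if for all $g,g'\in\mathcal F$ there is $x\in G$ with $gxH=g'xH$ (equivalently $x^{-1}g'^{-1}gx\in H$). The intersection density is $\rho(G,H)=\max\{|\mathcal F|/|H| : \mathcal F\subseteq G \text{ is } H\text{-intersecting}\}$, and the intersection spectrum of $G$ is $\sigma(G)=\{\rho(G,H): H\le G\}$. $\mathrm{AGL}(n,q)$ is the group of affine maps $v\mapsto Av+b$ of $\mathbb F_q^n$ with $A\in\mathrm{GL}(n,q)$, $b\in\mathbb F_q^n$, written as pairs $(A,b)$ with product $(A,b)(A',b')=(AA',Ab'+b)$. *)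

theory Defs
  imports "HOL-Analysis.Analysis" "HOL-Algebra.Group"
begin

definition H_intersecting :: "('g, 'b) monoid_scheme \<Rightarrow> 'g set \<Rightarrow> 'g set \<Rightarrow> bool" where
  "H_intersecting G H F \<longleftrightarrow> F \<subseteq> carrier G \<and>
     (\<forall>g\<in>F. \<forall>g'\<in>F. \<exists>x\<in>carrier G.
        inv\<^bsub>G\<^esub> x \<otimes>\<^bsub>G\<^esub> inv\<^bsub>G\<^esub> g' \<otimes>\<^bsub>G\<^esub> g \<otimes>\<^bsub>G\<^esub> x \<in> H)"

definition intersection_density :: "('g, 'b) monoid_scheme \<Rightarrow> 'g set \<Rightarrow> real" where
  "intersection_density G H =
     Max {real (card F) / real (card H) | F. H_intersecting G H F}"

definition intersection_spectrum :: "('g, 'b) monoid_scheme \<Rightarrow> real set" where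
  "intersection_spectrum G = {intersection_density G H | H. subgroup H G}"

definition AGL :: "(('a::field ^ 'n ^ 'n) \<times> ('a ^ 'n)) monoid" where
  "AGL = \<lparr> carrier = {(A, b). invertible A},
           mult = (\<lambda>(A, b) (A', b'). (A ** A', A *v b' + b)),
           one = (mat 1, 0) \<rparr>"

end

theory Submission
  imports Defs "HOL-Number_Theory.Number_Theory"
begin

lemma AGL_mult [simp]: "(A, b) \<otimes>\<^bsub>AGL\<^esub> (A', b') = (A ** A', A *v b' + b)"
  by (simp add: AGL_def)
lemma AGL_one [simp]: "\<one>\<^bsub>AGL\<^esub> = (mat 1, 0)"
  by (simp add: AGL_def)
lemma AGL_carrier [simp]: "(x \<in> carrier AGL) = invertible (fst x)"
  by (cases x) (simp add: AGL_def)

lemma invertible_one: "invertible (mat 1 :: 'a::field^'n^'n)"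
  unfolding invertible_def by (metis matrix_mul_lid)

lemma group_AGL: "group (AGL :: (('a::field ^ 'n ^ 'n) \<times> ('a ^ 'n)) monoid)"
proof (rule groupI)
  fix x y :: "('a ^ 'n ^ 'n) \<times> ('a ^ 'n)"
  assume "x \<in> carrier AGL" "y \<in> carrier AGL"
  then show "x \<otimes>\<^bsub>AGL\<^esub> y \<in> carrier AGL"
    by (cases x, cases y) (auto simp: invertible_mult)
next
  show "\<one>\<^bsub>AGL\<^esub> \<in> carrier (AGL :: (('a::field ^ 'n ^ 'n) \<times> ('a ^ 'n)) monoid)"
    by (simp add: invertible_one)
next
  fix x y z :: "('a ^ 'n ^ 'n) \<times> ('a ^ 'n)"
  show "x \<otimes>\<^bsub>AGL\<^esub> y \<otimes>\<^bsub>AGL\<^esub> z = x \<otimes>\<^bsub>AGL\<^esub> (y \<otimes>\<^bsub>AGL\<^esub> z)"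
    by (cases x, cases y, cases z)
       (simp add: matrix_mul_assoc matrix_vector_mul_assoc matrix_vector_right_distrib add.assoc)
next
  fix x :: "('a ^ 'n ^ 'n) \<times> ('a ^ 'n)"
  show "\<one>\<^bsub>AGL\<^esub> \<otimes>\<^bsub>AGL\<^esub> x = x"
    by (cases x) simp
next
  fix x :: "('a ^ 'n ^ 'n) \<times> ('a ^ 'n)"
  assume "x \<in> carrier AGL"
  then obtain A b where x: "x = (A, b)" "invertible A" by (cases x) auto
  then obtain B where AB: "A ** B = mat 1" "B ** A = mat 1" unfolding invertible_def by blast
  then have "invertible B" unfolding invertible_def by blast
  moreover have "(B, - (B *v b)) \<otimes>\<^bsub>AGL\<^esub> x = \<one>\<^bsub>AGL\<^esub>"
    using x AB by simp
  ultimately show "\<exists>y \<in> carrier AGL. y \<otimes>\<^bsub>AGL\<^esub> x = \<one>\<^bsub>AGL\<^esub>"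
    by (intro bexI[of _ "(B, - (B *v b))"]) auto
qed

lemma AGL_inv:
  assumes "B ** A = mat 1" "A ** B = mat 1"
  shows "inv\<^bsub>AGL\<^esub> (A, b) = (B, - (B *v b))"
proof -
  interpret group AGL by (rule group_AGL)
  have iA: "invertible A" "invertible B" using assms unfolding invertible_def by blast+
  show ?thesis
    by (rule inv_equality) (use assms iA in simp_all)
qed

definition tmat :: "'a::field^'n \<Rightarrow> 'a^'n \<Rightarrow> 'n \<Rightarrow> 'a^'n^'n" where
  "tmat u w j = (\<chi> i l. (if i = l then 1 else 0) + (w$i - u$i) * (if l = j then inverse (u$j) else 0))"

lemma tmat_apply: "(tmat u w j *v x) $ i = x$i + (w$i - u$i) * (x$j / u$j)"
proof -
  have "(tmat u w j *v x) $ i = (\<Sum>l\<in>UNIV. (if i = l then x$l else 0)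
           + (w$i - u$i) * (if l = j then x$l / u$j else 0))"
    unfolding tmat_def matrix_vector_mult_def
    by (auto intro!: sum.cong simp: distrib_left divide_inverse mult.commute mult.left_commute)
  also have "\<dots> = x$i + (w$i - u$i) * (x$j / u$j)"
    by (simp only: sum.distrib sum_distrib_left[symmetric]) (simp add: sum.delta)
  finally show ?thesis .
qed

lemma tmat_maps: "u$j \<noteq> 0 \<Longrightarrow> tmat u w j *v u = w"
  by (simp add: vec_eq_iff tmat_apply)

lemma tmat_invertible:
  assumes "u$j \<noteq> 0" "w$j \<noteq> 0"
  shows "invertible (tmat u w j)"
  unfolding invertible_left_inverse matrix_left_invertible_ker
proof (intro allI impI)
  fix x assume h: "tmat u w j *v x = 0"
  then have e: "\<And>i. x$i + (w$i - u$i) * (x$j / u$j) = 0"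
    by (metis tmat_apply vec_lambda_beta zero_index)
  from e[of j] assms have "x$j * w$j / u$j = 0"
    by (simp add: field_simps)
  with assms have "x$j = 0" by simp
  with e show "x = 0" by (simp add: vec_eq_iff)
qed

lemma transitive_GL:
  fixes s d :: "'a::field^'n"
  assumes "s \<noteq> 0" "d \<noteq> 0"
  shows "\<exists>A. invertible A \<and> A *v s = d"
proof -
  obtain j where j: "s$j \<noteq> 0" using assms(1) by (metis vec_eq_iff zero_index)
  obtain j' where j': "d$j' \<noteq> 0" using assms(2) by (metis vec_eq_iff zero_index)
  define u :: "'a^'n" where "u = (\<chi> l. if l = j \<or> l = j' then 1 else 0)"
  have u: "u$j \<noteq> 0" "u$j' \<noteq> 0" by (simp_all add: u_def)
  define A where "A = tmat u d j' ** tmat s u j"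
  have "invertible A" unfolding A_def
    by (intro invertible_mult tmat_invertible) (use u j j' in auto)
  moreover have "A *v s = d" unfolding A_def
    by (simp add: matrix_vector_mul_assoc[symmetric] tmat_maps j u)
  ultimately show ?thesis by blast
qed

lemma CHAR_eq_p:
  assumes "prime p" "CARD('a::{field,finite}) = p ^ k"
  shows "CHAR('a) = p"
proof -
  have pos: "CHAR('a) > 0" by (rule finite_imp_CHAR_pos) simp
  have pr: "prime CHAR('a)" by (rule prime_CHAR_semidom[OF pos])
  have "CHAR('a) dvd p ^ k" using CHAR_dvd_CARD[where 'a='a] assms(2) by simp
  then have "CHAR('a) dvd p" using pr prime_dvd_power by blast
  then show ?thesis using pr assms(1) primes_dvd_imp_eq by blast
qed

definition PF :: "'a::field set" where "PF = range of_int"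

lemma card_PF:
  assumes "CHAR('a::{field,finite}) = p"
  shows "card (PF :: 'a set) = p"
proof -
  have pos: "CHAR('a) > 0" by (rule finite_imp_CHAR_pos) simp
  have "(PF :: 'a set) = of_int ` {0..<int p}"
  proof (auto simp: PF_def)
    fix a :: int
    have "(of_int a :: 'a) = of_int (a mod int p)"
      unfolding of_int_eq_iff_cong_CHAR using assms by simp
    moreover have "a mod int p \<in> {0..<int p}" using pos assms by simp
    ultimately show "(of_int a :: 'a) \<in> of_int ` {0..<int p}" by blast
  qed
  moreover have "inj_on (of_int :: int \<Rightarrow> 'a) {0..<int p}"
    unfolding inj_on_def of_int_eq_iff_cong_CHAR using assms
    by (auto intro: cong_less_imp_eq_int)
  ultimately have "card (PF :: 'a set) = card {0..<int p}" by (metis card_image)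
  then show ?thesis by simp
qed

lemma PF_simps: "0 \<in> PF" "1 \<in> PF" "-1 \<in> PF"
  "a \<in> PF \<Longrightarrow> b \<in> PF \<Longrightarrow> a + b \<in> PF"
  "a \<in> PF \<Longrightarrow> b \<in> PF \<Longrightarrow> a - b \<in> PF"
  "a \<in> PF \<Longrightarrow> b \<in> PF \<Longrightarrow> a * b \<in> PF"
  unfolding PF_def
  by (auto simp: image_iff intro: exI[of _ 0] exI[of _ 1] exI[of _ "-1"])
     (metis of_int_add of_int_diff of_int_mult)+

lemma PF_inverse:
  assumes "c \<in> (PF :: 'a::{field,finite} set)" "c \<noteq> 0"
  shows "\<exists>e\<in>PF. e * c = 1"
proof -
  have "(\<lambda>x. x * c) ` PF = PF"
    by (rule endo_inj_surj) (use assms in \<open>auto simp: PF_simps inj_on_def\<close>)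
  then have "1 \<in> (\<lambda>x. x * c) ` PF" using PF_simps(2) by simp
  then show ?thesis by auto
qed

definition subsp :: "('a::field^'n) set \<Rightarrow> bool" where
  "subsp S \<longleftrightarrow> 0 \<in> S \<and> (\<forall>x\<in>S. \<forall>y\<in>S. x + y \<in> S) \<and> (\<forall>c\<in>PF. \<forall>x\<in>S. c *s x \<in> S)"

lemma subsp_minus: "subsp S \<Longrightarrow> x \<in> S \<Longrightarrow> y \<in> S \<Longrightarrow> x - y \<in> S"
proof -
  assume a: "subsp S" "x \<in> S" "y \<in> S"
  then have "(-1) *s y \<in> S" using PF_simps unfolding subsp_def by blast
  then have "x + (-1) *s y \<in> S" using a unfolding subsp_def by blast
  then show ?thesis by (simp add: vec_eq_iff)
qed

lemma subsp_exists:
  fixes p :: nat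
  assumes "prime p" "CARD('a::{field,finite}) = p ^ k" "m \<le> k * CARD('n::finite)"
  shows "\<exists>S :: ('a^'n) set. subsp S \<and> card S = p ^ m"
  using assms(3)
proof (induction m)
  case 0
  have "subsp ({0} :: ('a^'n) set)" unfolding subsp_def by simp
  then show ?case by (intro exI[of _ "{0}"]) simp
next
  case (Suc m)
  then obtain S :: "('a^'n) set" where S: "subsp S" "card S = p ^ m" by auto
  have ch: "CHAR('a) = p" using CHAR_eq_p assms by blast
  have "card S < card (UNIV :: ('a^'n) set)"
  proof -
    have "p ^ m < p ^ (k * CARD('n))"
      using Suc.prems prime_gt_1_nat[OF assms(1)] by (intro power_strict_increasing) auto
    also have "\<dots> = card (UNIV :: ('a^'n) set)" by (simp add: assms(2) power_mult)
    finally show ?thesis using S by simp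
  qed
  then obtain v where v: "v \<notin> S" by (metis UNIV_I card_mono finite leD subsetI)
  define S' where "S' = (\<lambda>(s, c). s + c *s v) ` (S \<times> PF)"
  have inj: "inj_on (\<lambda>(s, c). s + c *s v) (S \<times> PF)"
  proof (clarsimp simp: inj_on_def)
    fix s c s' c'
    assume h: "s \<in> S" "c \<in> PF" "s' \<in> S" "c' \<in> PF" "s + c *s v = s' + c' *s v"
    show "s = s' \<and> c = c'"
    proof (cases "c = c'")
      case True then show ?thesis using h by simp
    next
      case False
      then obtain e where e: "e \<in> PF" "e * (c - c') = 1"
        using PF_inverse[of "c - c'"] h PF_simps(5) by force
      have "(c - c') *s v = s' - s" using h(5) by (simp add: vec_eq_iff algebra_simps)
      then have "e *s ((c - c') *s v) = e *s (s' - s)" by simp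
      moreover have "e *s ((c - c') *s v) = v" using e(2) by (simp only: vector_smult_assoc vector_smult_lid)
      ultimately have "v = e *s (s' - s)" by simp
      moreover have "e *s (s' - s) \<in> S" using subsp_minus[OF S(1) h(3) h(1)] e S(1)
        unfolding subsp_def by blast
      ultimately show ?thesis using v by simp
    qed
  qed
  have "card S' = p ^ Suc m" unfolding S'_def
    using card_image[OF inj] S card_PF[OF ch] by (simp add: card_cartesian_product)
  moreover have "subsp S'"
    unfolding subsp_def
  proof (intro conjI ballI)
    show "0 \<in> S'" unfolding S'_def using S(1) PF_simps(1) unfolding subsp_def
      by (auto simp: image_iff intro!: bexI[of _ "0"] bexI[of _ "0::'a"])
  next
    fix x y assume "x \<in> S'" "y \<in> S'"
    then obtain s c s' c' where "x = s + c *s v" "y = s' + c' *s v" "s \<in> S" "c \<in> PF" "s' \<in> S" "c' \<in> PF"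
      unfolding S'_def by auto
    moreover have "x + y = (s + s') + (c + c') *s v" using calculation
      by (simp add: vec_eq_iff algebra_simps)
    moreover have "(s + s', c + c') \<in> S \<times> PF" using calculation S(1) PF_simps unfolding subsp_def by auto
    ultimately show "x + y \<in> S'" unfolding S'_def
      by (metis (no_types, lifting) case_prod_conv image_eqI)
  next
    fix a :: 'a and x assume "a \<in> PF" "x \<in> S'"
    then obtain s c where "x = s + c *s v" "s \<in> S" "c \<in> PF"
      unfolding S'_def by auto
    moreover have "a *s x = (a *s s) + (a * c) *s v" using calculation
      by (simp add: vec_eq_iff algebra_simps)
    moreover have "(a *s s, a * c) \<in> S \<times> PF" using calculation S(1) PF_simps \<open>a \<in> PF\<close> unfolding subsp_def by auto
    ultimately show "a *s x \<in> S'" unfolding S'_def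
      by (metis (no_types, lifting) case_prod_conv image_eqI)
  qed
  ultimately show ?case by blast
qed

lemma inv_pair:
  assumes "invertible (A :: 'a::field^'n^'n)"
  obtains B where "B ** A = mat 1" "A ** B = mat 1" "inv\<^bsub>AGL\<^esub> (A, b) = (B, - (B *v b))"
  using assms AGL_inv unfolding invertible_def by metis

lemma intersecting_fst:
  fixes H F :: "(('a::field ^ 'n ^ 'n) \<times> ('a ^ 'n)) set"
  assumes "H_intersecting AGL H F" "H \<subseteq> range (\<lambda>b. (mat 1, b))" "g \<in> F" "g' \<in> F"
  shows "fst g = fst g'"
proof -
  obtain A b A' b' where g: "g = (A, b)" "g' = (A', b')" by (cases g, cases g')
  have iA: "invertible A'" using assms(1,4) g unfolding H_intersecting_def by force
  obtain x where x: "x \<in> carrier AGL"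
    "inv\<^bsub>AGL\<^esub> x \<otimes>\<^bsub>AGL\<^esub> inv\<^bsub>AGL\<^esub> g' \<otimes>\<^bsub>AGL\<^esub> g \<otimes>\<^bsub>AGL\<^esub> x \<in> H"
    using assms(1,3,4) unfolding H_intersecting_def by blast
  obtain X c where xc: "x = (X, c)" by (cases x)
  have iX: "invertible X" using x xc by simp
  obtain Xi where Xi: "Xi ** X = mat 1" "X ** Xi = mat 1" "inv\<^bsub>AGL\<^esub> (X, c) = (Xi, - (Xi *v c))"
    using inv_pair[OF iX] by metis
  obtain Ai where Ai: "Ai ** A' = mat 1" "A' ** Ai = mat 1" "inv\<^bsub>AGL\<^esub> (A', b') = (Ai, - (Ai *v b'))"
    using inv_pair[OF iA] by metis
  have "Xi ** Ai ** A ** X = mat 1"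
    using x(2) assms(2) unfolding xc g Xi(3) Ai(3) by auto
  then have "X ** (Xi ** Ai ** A ** X) ** Xi = X ** Xi" by (simp add: matrix_mul_rid)
  then have "Ai ** A ** X ** Xi = mat 1" using Xi by (simp add: matrix_mul_assoc matrix_mul_lid matrix_mul_rid)
  then have "Ai ** A = mat 1" using Xi by (metis matrix_mul_assoc matrix_mul_rid)
  then have "A' ** (Ai ** A) = A'" by (simp add: matrix_mul_rid)
  then have "A = A'" using Ai by (metis matrix_mul_assoc matrix_mul_lid)
  then show ?thesis using g by simp
qed

lemma mv_neg: "(Xi :: 'a::field^'n^'m) *v - b = - (Xi *v b)"
  by (simp add: vec_eq_iff matrix_vector_mult_def sum_negf)

lemma conj_translation:
  fixes X Xi :: "'a::field^'n^'n" and b b' :: "'a^'n"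
  assumes "Xi ** X = mat 1" "X ** Xi = mat 1"
  shows "inv\<^bsub>AGL\<^esub> (X, 0) \<otimes>\<^bsub>AGL\<^esub> inv\<^bsub>AGL\<^esub> (mat 1, b') \<otimes>\<^bsub>AGL\<^esub> (mat 1, b) \<otimes>\<^bsub>AGL\<^esub> (X, 0)
     = (mat 1, Xi *v (b - b'))"
proof -
  have i1: "inv\<^bsub>AGL\<^esub> (X, 0) = (Xi, 0)" using AGL_inv[OF assms, of 0] by simp
  have i2: "inv\<^bsub>AGL\<^esub> (mat 1 :: 'a^'n^'n, b') = (mat 1, - b')"
    using AGL_inv[of "mat 1" "mat 1 :: 'a^'n^'n" b'] by simp
  show ?thesis unfolding i1 i2 using assms
    by (simp add: matrix_vector_mult_diff_distrib matrix_vector_right_distrib mv_neg)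
qed

theorem theorem1p2:
  fixes p k i :: nat
  assumes "prime p" and "k \<ge> 1"
    and "CARD('a::{field,finite}) = p ^ k"
    and "1 \<le> i" and "i \<le> k * CARD('n::finite)"
  shows "real p ^ (k * CARD('n) - i)
           \<in> intersection_spectrum (AGL :: (('a ^ 'n ^ 'n) \<times> ('a ^ 'n)) monoid)"
proof -
  obtain S :: "('a^'n) set" where S: "subsp S" "card S = p ^ i"
    using subsp_exists[OF assms(1,3,5)] by blast
  define H :: "(('a ^ 'n ^ 'n) \<times> ('a ^ 'n)) set" where "H = (\<lambda>b. (mat 1, b)) ` S"
  define T :: "(('a ^ 'n ^ 'n) \<times> ('a ^ 'n)) set" where "T = range (\<lambda>b. (mat 1, b))"
  have injt: "inj (\<lambda>b. (mat 1 :: 'a^'n^'n, b))" by (simp add: inj_on_def)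
  have cardH: "card H = p ^ i" unfolding H_def using S by (simp add: card_image inj_on_subset[OF injt])
  have cardT: "card T = p ^ (k * CARD('n))" unfolding T_def
    by (simp add: card_image injt assms(3) power_mult)
  have Hsub: "H \<subseteq> range (\<lambda>b. (mat 1, b))" unfolding H_def by auto
  interpret G: group "AGL :: (('a ^ 'n ^ 'n) \<times> ('a ^ 'n)) monoid" by (rule group_AGL)
  have sg: "subgroup H AGL"
  proof (rule G.subgroupI)
    show "H \<subseteq> carrier AGL" unfolding H_def by (auto simp: invertible_one)
    show "H \<noteq> {}" unfolding H_def using S unfolding subsp_def by auto
  next
    fix a assume "a \<in> H"
    then obtain b where b: "a = (mat 1, b)" "b \<in> S" unfolding H_def by auto
    have "inv\<^bsub>AGL\<^esub> a = (mat 1, 0 - b)" unfolding b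
      using AGL_inv[of "mat 1" "mat 1 :: 'a^'n^'n" b] by simp
    moreover have "0 - b \<in> S" using subsp_minus[OF S(1) _ b(2)] S(1) unfolding subsp_def by blast
    ultimately show "inv\<^bsub>AGL\<^esub> a \<in> H" unfolding H_def by blast
  next
    fix a c assume "a \<in> H" "c \<in> H"
    then obtain b b' where b: "a = (mat 1, b)" "b \<in> S" "c = (mat 1, b')" "b' \<in> S" unfolding H_def by auto
    then have "a \<otimes>\<^bsub>AGL\<^esub> c = (mat 1, b' + b)" by simp
    moreover have "b' + b \<in> S" using S(1) b unfolding subsp_def by blast
    ultimately show "a \<otimes>\<^bsub>AGL\<^esub> c \<in> H" unfolding H_def by blast
  qed
  have c1: "1 < card S" using S(2) assms(4) prime_gt_1_nat[OF assms(1)]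
    by (metis Suc_le_eq One_nat_def one_less_power)
  have "\<exists>s0. s0 \<in> S \<and> s0 \<noteq> 0"
  proof (rule ccontr)
    assume "\<not> ?thesis"
    then have "S \<subseteq> {0}" by blast
    then have "card S \<le> card {0::'a^'n}" by (intro card_mono) auto
    with c1 show False by simp
  qed
  then obtain s0 where s0: "s0 \<in> S" "s0 \<noteq> 0" by blast
  have Tint: "H_intersecting AGL H T"
    unfolding H_intersecting_def
  proof (intro conjI ballI)
    show "T \<subseteq> carrier AGL" unfolding T_def by (auto simp: invertible_one)
  next
    fix g g' assume "g \<in> T" "g' \<in> T"
    then obtain b b' where g: "g = (mat 1, b)" "g' = (mat 1, b')" unfolding T_def by auto
    define d where "d = b - b'"
    have "\<exists>X Xi. Xi ** X = mat 1 \<and> X ** Xi = mat 1 \<and> Xi *v d \<in> S"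
    proof (cases "d = 0")
      case True
      then show ?thesis using S(1) unfolding subsp_def
        by (intro exI[of _ "mat 1"]) (simp add: matrix_mul_lid)
    next
      case False
      obtain X where X: "invertible X" "X *v s0 = d" using transitive_GL[OF s0(2) False] by blast
      then obtain Xi where Xi: "Xi ** X = mat 1" "X ** Xi = mat 1" unfolding invertible_def by blast
      have "Xi *v d = s0" unfolding X(2)[symmetric] by (simp add: matrix_vector_mul_assoc Xi)
      then show ?thesis using Xi s0 by blast
    qed
    then obtain X Xi where X: "Xi ** X = mat 1" "X ** Xi = mat 1" "Xi *v d \<in> S" by blast
    have "invertible X" using X(1,2) unfolding invertible_def by blast
    then have "(X, 0) \<in> carrier AGL" by simp
    moreover have "inv\<^bsub>AGL\<^esub> (X, 0) \<otimes>\<^bsub>AGL\<^esub> inv\<^bsub>AGL\<^esub> g' \<otimes>\<^bsub>AGL\<^esub> g \<otimes>\<^bsub>AGL\<^esub> (X, 0) \<in> H"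
      unfolding g conj_translation[OF X(1,2)] H_def using X(3) d_def by blast
    ultimately show "\<exists>x\<in>carrier AGL. inv\<^bsub>AGL\<^esub> x \<otimes>\<^bsub>AGL\<^esub> inv\<^bsub>AGL\<^esub> g' \<otimes>\<^bsub>AGL\<^esub> g \<otimes>\<^bsub>AGL\<^esub> x \<in> H"
      by blast
  qed
  have bound: "card F \<le> card T" if F: "H_intersecting AGL H F" for F
  proof (cases "F = {}")
    case True then show ?thesis by simp
  next
    case False
    then obtain g0 where g0: "g0 \<in> F" by blast
    have "F \<subseteq> (\<lambda>b. (fst g0, b)) ` UNIV"
    proof
      fix g assume "g \<in> F"
      then have "fst g = fst g0" using intersecting_fst[OF F Hsub _ g0] by blast
      then show "g \<in> (\<lambda>b. (fst g0, b)) ` UNIV" by (metis prod.collapse rangeI)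
    qed
    then have "card F \<le> card ((\<lambda>b. (fst g0, b)) ` (UNIV :: ('a^'n) set))" by (rule card_mono[OF finite])
    also have "\<dots> \<le> card (UNIV :: ('a^'n) set)" by (rule card_image_le) simp
    also have "\<dots> = card T" unfolding T_def by (simp add: card_image injt)
    finally show ?thesis .
  qed
  define M where "M = {real (card F) / real (card H) | F. H_intersecting AGL H F}"
  have finM: "finite M"
  proof -
    have "M = (\<lambda>F. real (card F) / real (card H)) ` {F. H_intersecting AGL H F}" unfolding M_def by auto
    then show ?thesis by simp
  qed
  have "Max M = real (card T) / real (card H)"
  proof (rule Max_eqI[OF finM])
    fix y assume "y \<in> M"
    then obtain F where "y = real (card F) / real (card H)" "H_intersecting AGL H F" unfolding M_def by blast
    then show "y \<le> real (card T) / real (card H)" using bound by (simp add: divide_right_mono)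
  next
    show "real (card T) / real (card H) \<in> M" unfolding M_def using Tint by blast
  qed
  moreover have "intersection_density AGL H = Max M" unfolding intersection_density_def M_def ..
  ultimately have "intersection_density AGL H = real p ^ (k * CARD('n) - i)"
    unfolding cardT cardH
    using prime_gt_0_nat[OF assms(1)] assms(5) by (simp add: power_diff)
  then show ?thesis unfolding intersection_spectrum_def using sg by (auto intro!: exI[of _ H])
qed

end
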